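(* Let $\langle Q,A,\delta,\{q_0\},F\rangle$ be a transitive group automaton with $F\neq\emptyset$, let $k\in\mathbb{N}$, and let $\langle Q_k,A,\delta_k,I_k,F_k\rangle$ be the $k$-digit buffer over it. Let $x\in A^{\mathbb{N}}$ be normal and $s\in Q_k$. Then there is a subset $Q'\subseteq Q_k$ such that: $Q'$ is closed under $\delta_k$ and for all $s_1,s_2\in Q'$ there is a word $u\in A^*$ with $s_1\xrightarrow{u}s_2$ (i.e. the restricted automaton on $Q'$ is transitive); $F_k\cap Q'\neq\emptyset$; the second coordinate of $\widetilde{T}^i(x,s)$ lies in $Q'$ for all sufficiently large $i$; and every word in $A^k$ appears as the second coordinate of some element of $Q'$ (i.e. for each $v\in A^k$ there is $(q,v)\in Q'$).
   Context: An automaton is transitive if for all states $q_1,q_2$ there is a word $w$ with $q_1\xrightarrow{w}q_2$. A group automaton is a deterministic automaton in which, for each symbol $a$, the map $p\mapsto\delta(p,a)$ is a permutation of the states. The $k$-digit buffer over $\langle Q,A,\delta,\{q_0\},F\rangle$ is the automaton with state set $Q_k=Q\times A^k$, final states $F_k=F\times A^k$, initial state set $I_k=\{(q_0,w_0)\}$ for some fixed $w_0\in A^k$, and transition function $\delta_k((q,w),a)=(\delta(q,a),w)$ if $\delta(q,a)\notin F$, and $\delta_k((q,w),a)=(\delta(q,a),w[2..k]a)$ if $\delta(q,a)\in F$. For $X=A^{\mathbb{N}}$ with shift $T$ ($(Tx)_i=x_{i+1}$), the augmented map on $X\times Q_k$ is $\widetilde{T}(x,s)=(Tx,\delta_k(s,x_1))$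 where $x=x_1x_2\cdots$. A sequence $x$ is normal if every word $w\in A^*$ occurs in $x$ with limiting frequency $(\#A)^{-|w|}$. *)

theory Defs
  imports "HOL-Analysis.Analysis"
begin

definition delta_star :: "('q \<Rightarrow> 'a \<Rightarrow> 'q) \<Rightarrow> 'q \<Rightarrow> 'a list \<Rightarrow> 'q" where
  "delta_star \<delta> q w = fold (\<lambda>a p. \<delta> p a) w q"

definition transitive_aut :: "('q \<Rightarrow> 'a \<Rightarrow> 'q) \<Rightarrow> bool" where
  "transitive_aut \<delta> \<longleftrightarrow> (\<forall>q1 q2. \<exists>w. delta_star \<delta> q1 w = q2)"

definition group_aut :: "('q \<Rightarrow> 'a \<Rightarrow> 'q) \<Rightarrow> bool" where
  "group_aut \<delta> \<longleftrightarrow> (\<forall>a. bij (\<lambda>p. \<delta> p a))"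

text \<open>When the new state is final, the buffer drops its first letter and appends a
  (w[2..k]a, written drop 1 (w @ [a]), which has length k also for k = 0).\<close>

definition buffer_states :: "nat \<Rightarrow> ('q \<times> 'a list) set" where
  "buffer_states k = {(q, w). length w = k}"

definition buffer_final :: "'q set \<Rightarrow> nat \<Rightarrow> ('q \<times> 'a list) set" where
  "buffer_final F k = {(q, w). q \<in> F \<and> length w = k}"

definition buffer_delta :: "('q \<Rightarrow> 'a \<Rightarrow> 'q) \<Rightarrow> 'q set \<Rightarrow> ('q \<times> 'a list) \<Rightarrow> 'a \<Rightarrow> ('q \<times> 'a list)" where
  "buffer_delta \<delta> F s a =
     (let q' = \<delta> (fst s) a in
      if q' \<in> F then (q', drop 1 (snd s @ [a])) else (q', snd s))"

definition aug_map :: "('q \<Rightarrow> 'a \<Rightarrow> 'q) \<Rightarrow> 'q set \<Rightarrow>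
    (nat \<Rightarrow> 'a) \<times> ('q \<times> 'a list) \<Rightarrow> (nat \<Rightarrow> 'a) \<times> ('q \<times> 'a list)" where
  "aug_map \<delta> F p = (\<lambda>i. fst p (Suc i), buffer_delta \<delta> F (snd p) (fst p 0))"

definition occurs_at :: "(nat \<Rightarrow> 'a) \<Rightarrow> 'a list \<Rightarrow> nat \<Rightarrow> bool" where
  "occurs_at x w i \<longleftrightarrow> (\<forall>j < length w. x (i + j) = w ! j)"

definition normal_seq :: "(nat \<Rightarrow> 'a::finite) \<Rightarrow> bool" where
  "normal_seq x \<longleftrightarrow> (\<forall>w :: 'a list.
     (\<lambda>n. real (card {i. i < n \<and> occurs_at x w i}) / real n)
       \<longlonglongrightarrow> 1 / real (CARD('a)) ^ length w)"

end

theory Submission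
  imports Defs
begin

lemma ds_Nil[simp]: "delta_star d t [] = t"
  by (simp add: delta_star_def)
lemma ds_Cons[simp]: "delta_star d t (a # u) = delta_star d (d t a) u"
  by (simp add: delta_star_def)
lemma ds_append[simp]: "delta_star d t (u @ v) = delta_star d (delta_star d t u) v"
  by (simp add: delta_star_def)

definition recur :: "('s \<Rightarrow> 'b \<Rightarrow> 's) \<Rightarrow> 's \<Rightarrow> bool" where
  "recur d t \<longleftrightarrow> (\<forall>t'\<in>range (delta_star d t). t \<in> range (delta_star d t'))"

lemma reach_trans:
  assumes "t' \<in> range (delta_star d t)" "t'' \<in> range (delta_star d t')"
  shows "t'' \<in> range (delta_star d t)"
proof -
  obtain u v where "t' = delta_star d t u" "t'' = delta_star d t' v" using assms by auto
  then have "t'' = delta_star d t (u @ v)" by simp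
  then show ?thesis by blast
qed

lemma reach_closed:
  assumes "\<forall>t\<in>S. \<forall>a. d t a \<in> S" "t \<in> S"
  shows "delta_star d t u \<in> S"
  using assms(2) by (induction u arbitrary: t) (auto simp: assms(1))

lemma recur_pres:
  assumes "recur d t" "t' \<in> range (delta_star d t)"
  shows "recur d t'"
  unfolding recur_def
proof
  fix t'' assume h: "t'' \<in> range (delta_star d t')"
  then have "t'' \<in> range (delta_star d t)" by (rule reach_trans[OF assms(2)])
  then have "t \<in> range (delta_star d t'')" using assms(1) unfolding recur_def by blast
  then show "t' \<in> range (delta_star d t'')" by (rule reach_trans[OF _ assms(2)])
qed

lemma exists_recur:
  assumes cl: "\<forall>t\<in>S. \<forall>a. d t a \<in> S" and fin: "finite S" and tS: "t \<in> S"
  shows "\<exists>u. recur d (delta_star d t u)"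
proof -
  have finR: "finite (range (delta_star d t'))" if "t' \<in> S" for t'
  proof -
    have "range (delta_star d t') \<subseteq> S" using reach_closed[OF cl that] by auto
    then show ?thesis using fin finite_subset by blast
  qed
  obtain t' where t': "t' \<in> range (delta_star d t)"
    "\<forall>y. y \<in> range (delta_star d t) \<longrightarrow> card (range (delta_star d t')) \<le> card (range (delta_star d y))"
  proof -
    have t0: "t \<in> range (delta_star d t)" using rangeI[of "delta_star d t" "[]"] by simp
    show ?thesis using that ex_has_least_nat[of "\<lambda>y. y \<in> range (delta_star d t)" t "\<lambda>y. card (range (delta_star d y))", OF t0]
      by blast
  qed
  obtain u0 where "t' = delta_star d t u0" using t'(1) by blast
  then have t'S: "t' \<in> S" using reach_closed[OF cl tS] by simp
  have "recur d t'"
    unfolding recur_def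
  proof
    fix t'' assume h: "t'' \<in> range (delta_star d t')"
    have sub: "range (delta_star d t'') \<subseteq> range (delta_star d t')"
      using reach_trans[OF h] by blast
    have "t'' \<in> range (delta_star d t)" by (rule reach_trans[OF t'(1) h])
    then have "card (range (delta_star d t')) \<le> card (range (delta_star d t''))" using t'(2) by blast
    moreover have "card (range (delta_star d t'')) \<le> card (range (delta_star d t'))"
      by (rule card_mono[OF finR[OF t'S] sub])
    ultimately have "card (range (delta_star d t'')) = card (range (delta_star d t'))" by simp
    then have "range (delta_star d t'') = range (delta_star d t')"
      by (rule card_subset_eq[OF finR[OF t'S] sub])
    moreover have "t' \<in> range (delta_star d t')" using rangeI[of "delta_star d t'" "[]"] by simp
    ultimately show "t' \<in> range (delta_star d t'')" by simp
  qed
  then show ?thesis using t'(1) by auto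
qed

lemma sync_list:
  assumes cl: "\<forall>t\<in>S. \<forall>a. d t a \<in> S" and fin: "finite S"
  shows "set ts \<subseteq> S \<Longrightarrow> \<exists>W. \<forall>t\<in>set ts. recur d (delta_star d t W)"
proof (induction ts)
  case Nil
  then show ?case by simp
next
  case (Cons t ts)
  then obtain W where W: "\<forall>t\<in>set ts. recur d (delta_star d t W)" by auto
  have "delta_star d t W \<in> S" using Cons.prems reach_closed[OF cl] by auto
  then obtain V where V: "recur d (delta_star d (delta_star d t W) V)"
    using exists_recur[OF cl fin] by blast
  have "recur d (delta_star d t' (W @ V))" if "t' \<in> set ts" for t'
    using recur_pres[OF W[rule_format, OF that], of "delta_star d (delta_star d t' W) V"] by simp
  then have "\<forall>t'\<in>set (t # ts). recur d (delta_star d t' (W @ V))"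
    using V by simp
  then show ?case by blast
qed

lemma sync:
  assumes cl: "\<forall>t\<in>S. \<forall>a. d t a \<in> S" and fin: "finite S"
  shows "\<exists>W. \<forall>t\<in>S. recur d (delta_star d t W)"
proof -
  obtain ts where "set ts = S" using finite_list fin by blast
  then show ?thesis using sync_list[OF cl fin, of ts] by auto
qed

lemma normal_occurs:
  fixes x :: "nat \<Rightarrow> 'a::finite"
  assumes "normal_seq x"
  shows "\<exists>i. occurs_at x W i"
proof (rule ccontr)
  assume "\<not> ?thesis"
  then have e: "\<And>n. {i. i < n \<and> occurs_at x W i} = {}" by auto
  have eq: "(\<lambda>n. real (card {i. i < n \<and> occurs_at x W i}) / real n) = (\<lambda>n. 0)"
    by (simp only: e card.empty) simp
  have lim: "(\<lambda>n. real (card {i. i < n \<and> occurs_at x W i}) / real n)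
       \<longlonglongrightarrow> 1 / real (CARD('a)) ^ length W"
    using assms unfolding normal_seq_def by blast
  have "1 / real (CARD('a)) ^ length W = 0"
    using LIMSEQ_unique[OF lim[unfolded eq] tendsto_const] by simp
  moreover have "real (CARD('a)) > 0" by simp
  ultimately show False by simp
qed

lemma occurs_map:
  assumes "occurs_at x W i"
  shows "map x [i..<i + length W] = W"
  using assms unfolding occurs_at_def by (intro nth_equalityI) auto

lemma aug_pow:
  "(aug_map \<delta> F ^^ i) (x, s) = (\<lambda>j. x (j + i), delta_star (buffer_delta \<delta> F) s (map x [0..<i]))"
proof (induction i)
  case 0
  then show ?case by simp
next
  case (Suc i)
  then show ?case by (simp add: aug_map_def)
qed

lemma bd_fst: "fst (buffer_delta \<delta> F t a) = \<delta> (fst t) a"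
  by (simp add: buffer_delta_def Let_def)

lemma bd_len: "length (snd (buffer_delta \<delta> F t a)) = length (snd t)"
  by (simp add: buffer_delta_def Let_def del: drop_append)

lemma ds_fst: "fst (delta_star (buffer_delta \<delta> F) t u) = delta_star \<delta> (fst t) u"
  by (induction u arbitrary: t) (auto simp: bd_fst)

lemma perm_return:
  fixes g :: "'q::finite \<Rightarrow> 'q"
  assumes "inj g"
  shows "\<exists>n>0. (g ^^ n) f = f"
proof -
  have "\<not> inj (\<lambda>n::nat. (g ^^ n) f)"
  proof
    assume "inj (\<lambda>n::nat. (g ^^ n) f)"
    then have "finite (UNIV :: nat set)"
      using finite_imageD[of "\<lambda>n::nat. (g ^^ n) f" UNIV] by (simp add: finite_subset)
    then show False by simp
  qed
  then obtain m n where mn: "m \<noteq> n" "(g ^^ m) f = (g ^^ n) f" unfolding inj_def by blast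
  have "\<exists>m n. m < n \<and> (g ^^ m) f = (g ^^ n) f"
  proof (cases "m < n")
    case True then show ?thesis using mn by blast
  next
    case False then have "n < m" using mn(1) by simp
    then show ?thesis using mn(2) by (intro exI[of _ n] exI[of _ m]) simp
  qed
  then obtain m n where mn: "m < n" "(g ^^ m) f = (g ^^ n) f" by blast
  have nn: "m + (n - m) = n" using mn(1) by simp
  have "(g ^^ (m + (n - m))) f = (g ^^ m) ((g ^^ (n - m)) f)" by (simp only: funpow_add comp_apply)
  then have "(g ^^ n) f = (g ^^ m) ((g ^^ (n - m)) f)" by (simp only: nn)
  then have "(g ^^ m) ((g ^^ (n - m)) f) = (g ^^ m) f" using mn by simp
  then have "(g ^^ (n - m)) f = f" using inj_fn[OF assms, of m] by (simp add: inj_def)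
  then show ?thesis using mn(1) by (intro exI[of _ "n - m"]) auto
qed

lemma rep_lemma:
  "(\<forall>i. 0 < i \<and> i \<le> j \<longrightarrow> ((\<lambda>p. \<delta> p b) ^^ i) q \<notin> F) \<Longrightarrow>
   delta_star (buffer_delta \<delta> F) (q, w) (replicate j b) = (((\<lambda>p. \<delta> p b) ^^ j) q, w)"
proof (induction j)
  case 0
  then show ?case by simp
next
  case (Suc j)
  have r: "replicate (Suc j) b = replicate j b @ [b]" by (simp add: replicate_append_same)
  have ih: "delta_star (buffer_delta \<delta> F) (q, w) (replicate j b) = (((\<lambda>p. \<delta> p b) ^^ j) q, w)"
    using Suc by auto
  have nf: "((\<lambda>p. \<delta> p b) ^^ Suc j) q \<notin> F" using Suc.prems by blast
  have "delta_star (buffer_delta \<delta> F) (q, w) (replicate (Suc j) b)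
     = buffer_delta \<delta> F (delta_star (buffer_delta \<delta> F) (q, w) (replicate j b)) b"
    by (simp only: r ds_append ds_Cons ds_Nil)
  also have "\<dots> = buffer_delta \<delta> F (((\<lambda>p. \<delta> p b) ^^ j) q, w) b" by (simp only: ih)
  also have "\<dots> = (((\<lambda>p. \<delta> p b) ^^ Suc j) q, w)" using nf by (simp add: buffer_delta_def Let_def)
  finally show ?case .
qed

lemma write_one:
  assumes "group_aut \<delta>" "f \<in> F"
  shows "\<exists>u f'. f' \<in> F \<and> delta_star (buffer_delta \<delta> (F::'q::finite set)) (f, w) u = (f', drop 1 (w @ [b]))"
proof -
  define g where "g = (\<lambda>p. \<delta> p b)"
  have "inj g" using assms(1) unfolding group_aut_def g_def bij_def by blast
  then obtain n where n: "n > 0" "(g ^^ n) f = f" using perm_return by blast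
  define m where "m = (LEAST n. 0 < n \<and> (g ^^ n) f \<in> F)"
  have m: "0 < m \<and> (g ^^ m) f \<in> F" unfolding m_def
    by (rule LeastI[of _ n]) (use n assms(2) in auto)
  have notF: "\<forall>i. 0 < i \<and> i \<le> m - 1 \<longrightarrow> (g ^^ i) f \<notin> F"
  proof (intro allI impI)
    fix i assume i: "0 < i \<and> i \<le> m - 1"
    then have "i < m" using m by linarith
    then have "\<not> (0 < i \<and> (g ^^ i) f \<in> F)" unfolding m_def by (rule not_less_Least)
    then show "(g ^^ i) f \<notin> F" using i by blast
  qed
  have r: "delta_star (buffer_delta \<delta> F) (f, w) (replicate (m - 1) b) = ((g ^^ (m - 1)) f, w)"
    using rep_lemma[where j="m - 1" and \<delta>=\<delta> and b=b and q=f and F=F and w=w] notF unfolding g_def by blast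
  have gm: "\<delta> ((g ^^ (m - 1)) f) b = (g ^^ m) f"
  proof -
    have "(g ^^ m) f = (g ^^ Suc (m - 1)) f" using m by simp
    then show ?thesis by (simp add: g_def)
  qed
  have "delta_star (buffer_delta \<delta> F) (f, w) (replicate (m - 1) b @ [b]) = ((g ^^ m) f, drop 1 (w @ [b]))"
    using r gm m by (simp add: buffer_delta_def Let_def)
  then show ?thesis using m by blast
qed

lemma drop_helper: "drop 1 (w @ [b]) @ v = drop 1 (w @ b # v)"
  by (cases w) auto

lemma write_word:
  assumes "group_aut \<delta>"
  shows "f \<in> F \<Longrightarrow> \<exists>u f'. f' \<in> F \<and> delta_star (buffer_delta \<delta> (F::'q::finite set)) (f, w) u = (f', drop (length v) (w @ v))"
proof (induction v arbitrary: f w)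
  case Nil
  then show ?case by (intro exI[of _ "[]"]) auto
next
  case (Cons b v)
  obtain u1 f1 where 1: "f1 \<in> F" "delta_star (buffer_delta \<delta> F) (f, w) u1 = (f1, drop 1 (w @ [b]))"
    using write_one[OF assms Cons.prems] by blast
  obtain u2 f2 where 2: "f2 \<in> F" "delta_star (buffer_delta \<delta> F) (f1, drop 1 (w @ [b])) u2 = (f2, drop (length v) (drop 1 (w @ [b]) @ v))"
    using Cons.IH[OF 1(1)] by blast
  have "drop (length v) (drop 1 (w @ [b]) @ v) = drop (length (b # v)) (w @ b # v)"
    by (simp only: drop_helper drop_drop) simp
  then have "delta_star (buffer_delta \<delta> F) (f, w) (u1 @ u2) = (f2, drop (length (b # v)) (w @ b # v))"
    using 1 2 by simp
  then show ?case using 2(1) by blast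
qed

theorem lemma4p2:
  fixes \<delta> :: "'q::finite \<Rightarrow> 'a::finite \<Rightarrow> 'q"
    and F :: "'q set" and k :: nat
    and x :: "nat \<Rightarrow> 'a" and s :: "'q \<times> 'a list"
  assumes "transitive_aut \<delta>" and "group_aut \<delta>" and "F \<noteq> {}"
    and "normal_seq x"
    and "s \<in> buffer_states k"
  shows "\<exists>Q' \<subseteq> buffer_states k.
           (\<forall>t\<in>Q'. \<forall>a. buffer_delta \<delta> F t a \<in> Q') \<and>
           (\<forall>s1\<in>Q'. \<forall>s2\<in>Q'. \<exists>u. delta_star (buffer_delta \<delta> F) s1 u = s2) \<and>
           buffer_final F k \<inter> Q' \<noteq> {} \<and>
           (\<exists>N. \<forall>i\<ge>N. snd ((aug_map \<delta> F ^^ i) (x, s)) \<in> Q') \<and>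
           (\<forall>v. length v = k \<longrightarrow> (\<exists>q. (q, v) \<in> Q'))"
proof -
  define d where "d = buffer_delta \<delta> F"
  define S where "S = (buffer_states k :: ('q \<times> 'a list) set)"
  have cl: "\<forall>t\<in>S. \<forall>a. d t a \<in> S"
  proof (intro ballI allI)
    fix t a assume "t \<in> S"
    then have "length (snd t) = k" unfolding S_def buffer_states_def by (cases t) auto
    then have "length (snd (d t a)) = k" unfolding d_def by (simp only: bd_len)
    then show "d t a \<in> S" unfolding S_def buffer_states_def by (cases "d t a") auto
  qed
  have "S = UNIV \<times> {xs. set xs \<subseteq> UNIV \<and> length xs = k}"
    unfolding S_def buffer_states_def by auto
  then have fin: "finite S" using finite_lists_length_eq[of "UNIV :: 'a set" k] by simp
  obtain W where W: "\<forall>t\<in>S. recur d (delta_star d t W)" using sync[OF cl fin] by blast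
  obtain i0 where i0: "occurs_at x W i0" using normal_occurs[OF assms(4)] by blast
  define N where "N = i0 + length W"
  define sN where "sN = delta_star d s (map x [0..<N])"
  have mapN: "map x [0..<N] = map x [0..<i0] @ W"
    unfolding N_def using occurs_map[OF i0] upt_add_eq_append[of 0 i0 "length W"] by simp
  have sN_eq: "sN = delta_star d (delta_star d s (map x [0..<i0])) W"
    unfolding sN_def mapN by simp
  have sS: "s \<in> S" using assms(5) S_def by simp
  have rec: "recur d sN" using W sN_eq reach_closed[OF cl sS] by auto
  have sNS: "sN \<in> S" unfolding sN_def using reach_closed[OF cl sS] .
  define Q' where "Q' = range (delta_star d sN)"
  have p1: "Q' \<subseteq> buffer_states k"
    unfolding Q'_def S_def[symmetric] using reach_closed[OF cl sNS] by auto
  have p2: "\<forall>t\<in>Q'. \<forall>a. buffer_delta \<delta> F t a \<in> Q'"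
  proof (intro ballI allI)
    fix t a assume "t \<in> Q'"
    then obtain u where "t = delta_star d sN u" unfolding Q'_def by auto
    then have "buffer_delta \<delta> F t a = delta_star d sN (u @ [a])" by (simp add: d_def)
    then show "buffer_delta \<delta> F t a \<in> Q'" unfolding Q'_def by blast
  qed
  have p3: "\<forall>s1\<in>Q'. \<forall>s2\<in>Q'. \<exists>u. delta_star (buffer_delta \<delta> F) s1 u = s2"
  proof (intro ballI)
    fix s1 s2 assume h: "s1 \<in> Q'" "s2 \<in> Q'"
    have "sN \<in> range (delta_star d s1)" using rec h(1) unfolding recur_def Q'_def by blast
    then obtain v where v: "delta_star d s1 v = sN" by (metis rangeE)
    obtain u2 where u2: "s2 = delta_star d sN u2" using h unfolding Q'_def by auto
    have "delta_star d s1 (v @ u2) = s2" using v u2 by simp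
    then show "\<exists>u. delta_star (buffer_delta \<delta> F) s1 u = s2" unfolding d_def by blast
  qed
  obtain f where f: "f \<in> F" using assms(3) by blast
  obtain w where w: "delta_star \<delta> (fst sN) w = f" using assms(1) unfolding transitive_aut_def by blast
  define t1 where "t1 = delta_star d sN w"
  have t1Q: "t1 \<in> Q'" unfolding t1_def Q'_def by blast
  have t1f: "fst t1 = f" unfolding t1_def d_def using ds_fst w by metis
  have t1S: "t1 \<in> S" unfolding t1_def using reach_closed[OF cl sNS] .
  have t1len: "length (snd t1) = k" using t1S unfolding S_def buffer_states_def by auto
  have p4: "buffer_final F k \<inter> Q' \<noteq> {}"
    using t1Q t1f t1len f unfolding buffer_final_def by (cases t1) auto
  have p5: "\<forall>i\<ge>N. snd ((aug_map \<delta> F ^^ i) (x, s)) \<in> Q'"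
  proof (intro allI impI)
    fix i assume "N \<le> i"
    then have "map x [0..<i] = map x [0..<N] @ map x [N..<i]"
    proof -
      have "N + (i - N) = i" using \<open>N \<le> i\<close> by simp
      moreover have "[0..<N + (i - N)] = [0..<N] @ [N..<N + (i - N)]" by (rule upt_add_eq_append) simp
      ultimately show ?thesis by simp
    qed
    then have "snd ((aug_map \<delta> F ^^ i) (x, s)) = delta_star d sN (map x [N..<i])"
      unfolding aug_pow sN_def d_def by simp
    then show "snd ((aug_map \<delta> F ^^ i) (x, s)) \<in> Q'" unfolding Q'_def by blast
  qed
  have p6: "\<forall>v. length v = k \<longrightarrow> (\<exists>q. (q, v) \<in> Q')"
  proof (intro allI impI)
    fix v :: "'a list" assume lv: "length v = k"
    obtain u f' where u: "delta_star (buffer_delta \<delta> F) (f, snd t1) u = (f', drop (length v) (snd t1 @ v))"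
      using write_word[OF assms(2) f] by blast
    have "drop (length v) (snd t1 @ v) = v" using lv t1len by simp
    moreover have "(f, snd t1) = t1" using t1f by (cases t1) auto
    ultimately have "delta_star d sN (w @ u) = (f', v)" using u unfolding t1_def d_def by simp
    then have "(f', v) \<in> Q'" unfolding Q'_def by (metis rangeI)
    then show "\<exists>q. (q, v) \<in> Q'" by blast
  qed
  show ?thesis
    apply (rule exI[of _ Q'])
    using p1 p2 p3 p4 p5 p6 by (intro conjI exI[of _ N]) auto
qed

end
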